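(* Let $f:E\to\mathbb{R}$ be $L$-smooth and $\gamma$-weakly-quasi-convex with respect to a minimizer $x_*$, for some $\gamma\in(0,1]$. Then the iterates of Algorithm AGMsDR (either option) started at $x^0$ satisfy, for every $k\ge 0$, $$A_k\big(f(x^k)-f(x_* )\big)\le(1-\gamma)A_k\big(f(x^0)-f(x_* )\big)+V(x_*,x^0).$$
   Context: $E$ is a finite-dimensional real vector space with a norm $\|\cdot\|$; $E^*$ is its dual, $\langle g,x\rangle$ denotes the value of $g\in E^*$ at $x\in E$, and $\|g\|_*=\max\{\langle g,x\rangle:\|x\|\le 1\}$. For $g\in E^*$, $g^{\#}$ denotes a (fixed) element $s\in E$ with $\|s\|\le 1$ and $\langle g,s\rangle=\|g\|_*$. A prox-function $d:E\to\mathbb{R}$ is continuously differentiable, convex, $1$-strongly convex with respect to $\|\cdot\|$ (i.e. $d(y)-d(x)-\langle\nabla d(x),y-x\rangle\ge\frac12\|y-x\|^2$ for all $x,y\in E$) and satisfies $\min_E d=0$; its Bregman divergence is $V(x,z)=d(x)-d(z)-\langle\nabla d(z),x-z\rangle$. A function $f:E\to\mathbb{R}$ is $L$-smooth ($L>0$) if it is continuously differentiable and $\|\nabla f(x)-\nabla f(y)\|_*\le L\|x-y\|$ for all $x,y\in E$. A differentiable $f$ with a minimizer $x_*$ is $\gamma$-weakly-quasi-convex ($\gamma\in(0,1]$) if $\gamma(f(x)-f(x_* ))\le\langle\nabla f(x),x-x_*\rangle$ for all $x\in E$. Algorithm AGMsDR (input $x^0\in E$, and $L$ for Option (a)): set $A_0=0$,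 $v^0=x^0$, $\psi_0(x)=V(x,x^0)$. For $k=0,1,2,\dots$: 1. Choose $\beta_k\in\arg\min_{\beta\in[0,1]} f(v^k+\beta(x^k-v^k))$ (a global minimizer over the interval) and set $y^k=v^k+\beta_k(x^k-v^k)$. 2. Option (a): $x^{k+1}\in\arg\min_{x\in E}\{f(y^k)+\langle\nabla f(y^k),x-y^k\rangle+\frac L2\|x-y^k\|^2\}$, and $a_{k+1}>0$ solves $\frac{a_{k+1}^2}{A_k+a_{k+1}}=\frac1L$. Option (b): $h_{k+1}\in\arg\min_{h\ge0} f(y^k-h(\nabla f(y^k))^{\#})$, $x^{k+1}=y^k-h_{k+1}(\nabla f(y^k))^{\#}$, and $a_{k+1}$ is the largest solution of $f(y^k)-\frac{a_{k+1}^2}{2(A_k+a_{k+1})}\|\nabla f(y^k)\|_*^2=f(x^{k+1})$. 3. $A_{k+1}=A_k+a_{k+1}$; $\psi_{k+1}(x)=\psi_k(x)+a_{k+1}\{f(y^k)+\langle\nabla f(y^k),x-y^k\rangle\}$; $v^{k+1}=\arg\min_{x\in E}\psi_{k+1}(x)$. It is assumed that all the minima in the algorithm are attained, and that $\nabla f(y^k)\neq 0$ for all iterations considered (otherwise $y^k$ is a stationary point and the method stops). *)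

theory Defs
  imports "HOL-Analysis.Analysis"
begin

text \<open>The finite-dimensional space E is a type 'a :: euclidean_space. The paper's norm is an
arbitrary norm nrm on E (not the Euclidean one). The dual space E* is identified with E via
the inner product: a functional g is represented by the vector g, acting as g \<bullet> x.
Gradients are thus vectors gf x with derivative (\<lambda>h. gf x \<bullet> h).\<close>

definition is_norm :: "('a::real_vector \<Rightarrow> real) \<Rightarrow> bool" where
  "is_norm nrm \<longleftrightarrow>
     (\<forall>x. 0 \<le> nrm x) \<and> (\<forall>x. nrm x = 0 \<longleftrightarrow> x = 0) \<and>
     (\<forall>c x. nrm (c *\<^sub>R x) = \<bar>c\<bar> * nrm x) \<and>
     (\<forall>x y. nrm (x + y) \<le> nrm x + nrm y)"

definition dual_norm :: "('a::real_inner \<Rightarrow> real) \<Rightarrow> 'a \<Rightarrow> real" where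
  "dual_norm nrm g = Sup {g \<bullet> x | x. nrm x \<le> 1}"

definition has_cont_gradient :: "('a::euclidean_space \<Rightarrow> real) \<Rightarrow> ('a \<Rightarrow> 'a) \<Rightarrow> bool" where
  "has_cont_gradient f gf \<longleftrightarrow>
     (\<forall>x. (f has_derivative (\<lambda>h. gf x \<bullet> h)) (at x)) \<and> continuous_on UNIV gf"

definition L_smooth ::
  "('a::euclidean_space \<Rightarrow> real) \<Rightarrow> real \<Rightarrow> ('a \<Rightarrow> real) \<Rightarrow> ('a \<Rightarrow> 'a) \<Rightarrow> bool" where
  "L_smooth nrm L f gf \<longleftrightarrow> L > 0 \<and> has_cont_gradient f gf \<and>
     (\<forall>x y. dual_norm nrm (gf x - gf y) \<le> L * nrm (x - y))"

definition weakly_quasi_convex ::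
  "real \<Rightarrow> ('a::euclidean_space \<Rightarrow> real) \<Rightarrow> ('a \<Rightarrow> 'a) \<Rightarrow> 'a \<Rightarrow> bool" where
  "weakly_quasi_convex \<gamma> f gf xs \<longleftrightarrow> 0 < \<gamma> \<and> \<gamma> \<le> 1 \<and> (\<forall>x. f xs \<le> f x) \<and>
     (\<forall>x. \<gamma> * (f x - f xs) \<le> gf x \<bullet> (x - xs))"

definition prox_function ::
  "('a::euclidean_space \<Rightarrow> real) \<Rightarrow> ('a \<Rightarrow> real) \<Rightarrow> ('a \<Rightarrow> 'a) \<Rightarrow> bool" where
  "prox_function nrm d gd \<longleftrightarrow> has_cont_gradient d gd \<and> convex_on UNIV d \<and>
     (\<forall>x y. d y - d x - gd x \<bullet> (y - x) \<ge> 1/2 * (nrm (y - x))\<^sup>2) \<and>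
     (\<exists>x. d x = 0) \<and> (\<forall>x. d x \<ge> 0)"

definition bregman :: "('a::real_inner \<Rightarrow> real) \<Rightarrow> ('a \<Rightarrow> 'a) \<Rightarrow> 'a \<Rightarrow> 'a \<Rightarrow> real" where
  "bregman d gd x z = d x - d z - gd z \<bullet> (x - z)"

definition is_sharp_map :: "('a::real_inner \<Rightarrow> real) \<Rightarrow> ('a \<Rightarrow> 'a) \<Rightarrow> bool" where
  "is_sharp_map nrm sharp \<longleftrightarrow>
     (\<forall>g. nrm (sharp g) \<le> 1 \<and> g \<bullet> sharp g = dual_norm nrm g)"

definition agm_psi ::
  "('a::real_inner \<Rightarrow> real) \<Rightarrow> ('a \<Rightarrow> 'a) \<Rightarrow> ('a \<Rightarrow> real) \<Rightarrow> ('a \<Rightarrow> 'a) \<Rightarrow> 'a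
    \<Rightarrow> (nat \<Rightarrow> real) \<Rightarrow> (nat \<Rightarrow> 'a) \<Rightarrow> nat \<Rightarrow> 'a \<Rightarrow> real" where
  "agm_psi d gd f gf x0 a y k z =
     bregman d gd z x0 + (\<Sum>i<k. a (Suc i) * (f (y i) + gf (y i) \<bullet> (z - y i)))"

text \<open>Steps 0..k-1 of AGMsDR (Option (a) if opt_a, else Option (b)) produce the
sequences x, v, y, beta, h, a, A. Choices among minimizers are arbitrary.\<close>
definition agmsdr_steps ::
  "bool \<Rightarrow> ('a::euclidean_space \<Rightarrow> real) \<Rightarrow> ('a \<Rightarrow> real) \<Rightarrow> ('a \<Rightarrow> 'a) \<Rightarrow> ('a \<Rightarrow> 'a)
    \<Rightarrow> ('a \<Rightarrow> real) \<Rightarrow> ('a \<Rightarrow> 'a) \<Rightarrow> real \<Rightarrow> nat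
    \<Rightarrow> (nat \<Rightarrow> 'a) \<Rightarrow> (nat \<Rightarrow> 'a) \<Rightarrow> (nat \<Rightarrow> 'a) \<Rightarrow> (nat \<Rightarrow> real) \<Rightarrow> (nat \<Rightarrow> real)
    \<Rightarrow> (nat \<Rightarrow> real) \<Rightarrow> (nat \<Rightarrow> real) \<Rightarrow> bool" where
  "agmsdr_steps opt_a nrm d gd sharp f gf L k x v y \<beta> h a A \<longleftrightarrow>
     A 0 = 0 \<and> v 0 = x 0 \<and>
     (\<forall>i<k.
        \<comment> \<open>step 1: exact line search on the segment [v_i, x_i]\<close>
        \<beta> i \<in> {0..1} \<and>
        (\<forall>b\<in>{0..1}. f (v i + \<beta> i *\<^sub>R (x i - v i)) \<le> f (v i + b *\<^sub>R (x i - v i))) \<and>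
        y i = v i + \<beta> i *\<^sub>R (x i - v i) \<and>
        \<comment> \<open>step 2\<close>
        (if opt_a then
           (\<forall>z. f (y i) + gf (y i) \<bullet> (x (Suc i) - y i) + L / 2 * (nrm (x (Suc i) - y i))\<^sup>2
                \<le> f (y i) + gf (y i) \<bullet> (z - y i) + L / 2 * (nrm (z - y i))\<^sup>2) \<and>
           a (Suc i) > 0 \<and> (a (Suc i))\<^sup>2 / (A i + a (Suc i)) = 1 / L
         else
           h (Suc i) \<ge> 0 \<and>
           (\<forall>t\<ge>0. f (y i - h (Suc i) *\<^sub>R sharp (gf (y i))) \<le> f (y i - t *\<^sub>R sharp (gf (y i)))) \<and>
           x (Suc i) = y i - h (Suc i) *\<^sub>R sharp (gf (y i)) \<and>
           A i + a (Suc i) \<noteq> 0 \<and>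
           f (y i) - (a (Suc i))\<^sup>2 / (2 * (A i + a (Suc i))) * (dual_norm nrm (gf (y i)))\<^sup>2
             = f (x (Suc i)) \<and>
           (\<forall>b. A i + b \<noteq> 0 \<and>
                f (y i) - b\<^sup>2 / (2 * (A i + b)) * (dual_norm nrm (gf (y i)))\<^sup>2 = f (x (Suc i))
                \<longrightarrow> b \<le> a (Suc i))) \<and>
        \<comment> \<open>step 3\<close>
        A (Suc i) = A i + a (Suc i) \<and>
        (\<forall>z. agm_psi d gd f gf (x 0) a y (Suc i) (v (Suc i))
               \<le> agm_psi d gd f gf (x 0) a y (Suc i) z))"

end

theory Submission
  imports Defs
begin


lemma nrm_zero: "is_norm nrm \<Longrightarrow> nrm 0 = 0"
  by (simp add: is_norm_def)

lemma nrm_neg: "is_norm nrm \<Longrightarrow> nrm (- x) = nrm x"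
proof -
  assume n: "is_norm nrm"
  have "nrm ((-1) *\<^sub>R x) = \<bar>-1\<bar> * nrm x" using n unfolding is_norm_def by blast
  then show ?thesis by simp
qed

lemma nrm_minus_commute: "is_norm nrm \<Longrightarrow> nrm (x - y) = nrm (y - x)"
  by (metis minus_diff_eq nrm_neg)

lemma nrm_sum: assumes n: "is_norm nrm" shows "finite S \<Longrightarrow> nrm (sum g S) \<le> (\<Sum>i\<in>S. nrm (g i))"
proof (induction S rule: finite_induct)
  case empty then show ?case by (simp add: nrm_zero[OF n])
next
  case (insert x F)
  have "nrm (g x + sum g F) \<le> nrm (g x) + nrm (sum g F)" using n unfolding is_norm_def by blast
  also have "\<dots> \<le> nrm (g x) + (\<Sum>i\<in>F. nrm (g i))" using insert by simp
  finally show ?case using insert by simp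
qed

lemma nrm_upper: assumes n: "is_norm (nrm :: 'a::euclidean_space \<Rightarrow> real)"
  shows "\<exists>B\<ge>0. \<forall>x. nrm x \<le> B * norm x"
proof (intro exI[of _ "\<Sum>b\<in>Basis. nrm b"] conjI allI)
  show "0 \<le> (\<Sum>b\<in>Basis. nrm b)" using n by (simp add: is_norm_def sum_nonneg)
  fix x :: 'a
  have "nrm x = nrm (\<Sum>b\<in>Basis. (x \<bullet> b) *\<^sub>R b)" by (simp add: euclidean_representation)
  also have "\<dots> \<le> (\<Sum>b\<in>Basis. nrm ((x \<bullet> b) *\<^sub>R b))" by (rule nrm_sum[OF n]) simp
  also have "\<dots> = (\<Sum>b\<in>Basis. \<bar>x \<bullet> b\<bar> * nrm b)" using n by (simp add: is_norm_def)
  also have "\<dots> \<le> (\<Sum>b\<in>Basis. norm x * nrm b)"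
    by (rule sum_mono, rule mult_right_mono) (use n Basis_le_norm in \<open>auto simp: is_norm_def\<close>)
  also have "\<dots> = (\<Sum>b\<in>Basis. nrm b) * norm x" by (simp add: sum_distrib_left mult.commute)
  finally show "nrm x \<le> (\<Sum>b\<in>Basis. nrm b) * norm x" .
qed

lemma nrm_cont: assumes n: "is_norm (nrm :: 'a::euclidean_space \<Rightarrow> real)"
  shows "continuous_on S nrm"
proof -
  obtain B where B: "B \<ge> 0" "\<And>x. nrm x \<le> B * norm x" using nrm_upper[OF n] by blast
  have tri: "nrm x \<le> nrm (x - y) + nrm y" for x y
    using n unfolding is_norm_def by (metis diff_add_cancel)
  have lip: "\<bar>nrm x - nrm y\<bar> \<le> B * norm (x - y)" for x y
    using tri[of x y] tri[of y x] nrm_minus_commute[OF n, of x y] B(2)[of "x - y"] by linarith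
  show ?thesis unfolding continuous_on_iff
  proof (intro ballI allI impI)
    fix x e assume "(e::real) > 0"
    show "\<exists>d>0. \<forall>x'\<in>S. dist x' x < d \<longrightarrow> dist (nrm x') (nrm x) < e"
    proof (intro exI[of _ "e / (B + 1)"] conjI ballI impI)
      show "0 < e / (B + 1)" using \<open>e > 0\<close> B by simp
      fix x' assume "dist x' x < e / (B + 1)"
      hence "(B+1) * norm (x' - x) < e" using B by (simp add: dist_norm field_simps)
      moreover have "B * norm (x' - x) \<le> (B+1) * norm (x' - x)" by (simp add: distrib_right)
      ultimately show "dist (nrm x') (nrm x) < e" using lip[of x' x] by (simp add: dist_real_def)
    qed
  qed
qed

lemma nrm_lower: assumes n: "is_norm (nrm :: 'a::euclidean_space \<Rightarrow> real)"
  shows "\<exists>m>0. \<forall>x. m * norm x \<le> nrm x"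
proof -
  obtain b :: 'a where b: "b \<in> Basis" using nonempty_Basis by blast
  have ne: "sphere (0::'a) 1 \<noteq> {}" using b by (auto intro!: exI[of _ b])
  obtain s where s: "s \<in> sphere (0::'a) 1" "\<And>y. y \<in> sphere 0 1 \<Longrightarrow> nrm s \<le> nrm y"
    using continuous_attains_inf[OF compact_sphere ne nrm_cont[OF n]] by blast
  have "s \<noteq> 0" using s(1) by auto
  hence m: "nrm s > 0" using n unfolding is_norm_def by (metis less_eq_real_def)
  show ?thesis
  proof (intro exI[of _ "nrm s"] conjI allI)
    show "nrm s > 0" by fact
    fix x :: 'a
    show "nrm s * norm x \<le> nrm x"
    proof (cases "x = 0")
      case True then show ?thesis by (simp add: nrm_zero[OF n])
    next
      case False
      have "nrm s \<le> nrm ((1 / norm x) *\<^sub>R x)" using s(2) False by simp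
      also have "\<dots> = nrm x / norm x" using n by (simp add: is_norm_def)
      finally show ?thesis using False by (simp add: field_simps)
    qed
  qed
qed

lemma dual_bdd: assumes n: "is_norm (nrm :: 'a::euclidean_space \<Rightarrow> real)"
  shows "bdd_above {g \<bullet> x | x. nrm x \<le> 1}"
proof -
  obtain m where m: "m > 0" "\<And>x. m * norm x \<le> nrm x" using nrm_lower[OF n] by blast
  show ?thesis unfolding bdd_above_def
  proof (intro exI[of _ "norm g / m"] ballI)
    fix t assume "t \<in> {g \<bullet> x | x. nrm x \<le> 1}"
    then obtain x where x: "t = g \<bullet> x" "nrm x \<le> 1" by blast
    have "norm x \<le> 1 / m" using m(2)[of x] x(2) m(1) by (simp add: field_simps)
    have "g \<bullet> x \<le> norm g * norm x" using Cauchy_Schwarz_ineq2 by (metis abs_le_iff)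
    also have "\<dots> \<le> norm g * (1/m)" by (rule mult_left_mono) (fact, simp)
    finally show "t \<le> norm g / m" using x by simp
  qed
qed

lemma dual_ineq: assumes n: "is_norm (nrm :: 'a::euclidean_space \<Rightarrow> real)"
  shows "u \<bullet> w \<le> dual_norm nrm u * nrm w"
proof (cases "w = 0")
  case True
  have "u \<bullet> 0 \<le> dual_norm nrm u" unfolding dual_norm_def
    by (rule cSup_upper[OF _ dual_bdd[OF n]]) (use nrm_zero[OF n] in \<open>auto intro!: exI[of _ 0]\<close>)
  then show ?thesis using True by (simp add: nrm_zero[OF n])
next
  case False
  hence p: "nrm w > 0" using n unfolding is_norm_def by (metis less_eq_real_def)
  have "nrm ((1/nrm w) *\<^sub>R w) = 1" using n p False by (simp add: is_norm_def)
  hence "u \<bullet> ((1/nrm w) *\<^sub>R w) \<le> dual_norm nrm u" unfolding dual_norm_def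
    by (intro cSup_upper[OF _ dual_bdd[OF n]]) (auto intro!: exI[of _ "(1/nrm w) *\<^sub>R w"])
  then show ?thesis using p by (simp add: field_simps)
qed

lemma dual_pos: assumes n: "is_norm (nrm :: 'a::euclidean_space \<Rightarrow> real)" and g: "g \<noteq> 0"
  shows "dual_norm nrm g > 0"
proof -
  have p: "nrm g > 0" using n g unfolding is_norm_def by (metis less_eq_real_def)
  have "g \<bullet> g \<le> dual_norm nrm g * nrm g" by (rule dual_ineq[OF n])
  moreover have "g \<bullet> g > 0" using g by simp
  ultimately show ?thesis using p by (metis not_le mult_nonpos_nonneg less_eq_real_def le_less_trans)
qed



lemma descent:
  assumes n: "is_norm (nrm :: 'a::euclidean_space \<Rightarrow> real)" and Ls: "L_smooth nrm L f gf"
  shows "f z \<le> f y + gf y \<bullet> (z - y) + L / 2 * (nrm (z - y))\<^sup>2"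
proof -
  define u where "u = z - y"
  have fd: "\<And>p. (f has_derivative (\<lambda>h. gf p \<bullet> h)) (at p)" using Ls
    unfolding L_smooth_def has_cont_gradient_def by blast
  have lip: "\<And>p q. dual_norm nrm (gf p - gf q) \<le> L * nrm (p - q)" using Ls unfolding L_smooth_def by blast
  define \<phi> where "\<phi> t = f (y + t *\<^sub>R u) - t * (gf y \<bullet> u) - L / 2 * t\<^sup>2 * (nrm u)\<^sup>2" for t
  have "\<phi> 1 \<le> \<phi> 0"
  proof (rule DERIV_nonpos_imp_nonincreasing[of 0 1])
    fix t :: real assume t: "0 \<le> t" "t \<le> 1"
    define p where "p = y + t *\<^sub>R u"
    have d1: "((\<lambda>t. y + t *\<^sub>R u) has_derivative (\<lambda>s. s *\<^sub>R u)) (at t)"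
      by (auto intro!: derivative_eq_intros)
    have d2: "((\<lambda>t. f (y + t *\<^sub>R u)) has_derivative (\<lambda>s. gf p \<bullet> (s *\<^sub>R u))) (at t)"
      using has_derivative_compose[OF d1 fd[of "y + t *\<^sub>R u"]] unfolding p_def .
    have "(\<lambda>s. gf p \<bullet> (s *\<^sub>R u)) = (*) (gf p \<bullet> u)" by (auto simp: mult.commute)
    with d2 have d3: "DERIV (\<lambda>t. f (y + t *\<^sub>R u)) t :> gf p \<bullet> u"
      by (simp add: has_field_derivative_def)
    define F where "F = (\<lambda>t. f (y + t *\<^sub>R u))"
    have d3': "DERIV F t :> gf p \<bullet> u" using d3 unfolding F_def .
    have "DERIV (\<lambda>t. F t - t * (gf y \<bullet> u) - L / 2 * t\<^sup>2 * (nrm u)\<^sup>2) t :> gf p \<bullet> u - gf y \<bullet> u - L / 2 * (2 * t) * (nrm u)\<^sup>2"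
      apply (rule derivative_eq_intros d3' refl)+
      apply simp
      done
    hence d4: "DERIV \<phi> t :> gf p \<bullet> u - gf y \<bullet> u - L / 2 * (2 * t) * (nrm u)\<^sup>2"
      unfolding \<phi>_def F_def .
    have "gf p \<bullet> u - gf y \<bullet> u = (gf p - gf y) \<bullet> u" by (simp add: inner_diff_left)
    also have "\<dots> \<le> dual_norm nrm (gf p - gf y) * nrm u" by (rule dual_ineq[OF n])
    also have "\<dots> \<le> L * nrm (p - y) * nrm u"
      by (rule mult_right_mono[OF lip]) (use n in \<open>simp add: is_norm_def\<close>)
    also have "nrm (p - y) = t * nrm u" using n t unfolding p_def is_norm_def by simp
    finally have "gf p \<bullet> u - gf y \<bullet> u - L / 2 * (2 * t) * (nrm u)\<^sup>2 \<le> 0"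
      by (simp add: power2_eq_square mult.assoc)
    with d4 show "\<exists>y. DERIV \<phi> t :> y \<and> y \<le> 0" by blast
  qed simp
  then show ?thesis unfolding \<phi>_def u_def by simp
qed

lemma linesearch:
  fixes f :: "'a::euclidean_space \<Rightarrow> real"
  assumes fd: "(f has_derivative (\<lambda>h. g \<bullet> h)) (at yy)"
    and b: "\<beta> \<in> {0..1}" and mn: "\<forall>b\<in>{0..1}. f (v + \<beta> *\<^sub>R (x - v)) \<le> f (v + b *\<^sub>R (x - v))"
    and yy: "yy = v + \<beta> *\<^sub>R (x - v)"
  shows "0 \<le> g \<bullet> (v - yy)"
proof (cases "\<beta> = 0")
  case True then show ?thesis using yy by simp
next
  case False
  hence bp: "\<beta> > 0" using b by auto
  have eq: "g \<bullet> (v - yy) = - (\<beta> * (g \<bullet> (x - v)))" using yy by (simp add: inner_diff_right)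
  show ?thesis
  proof (rule ccontr)
    assume "\<not> ?thesis"
    hence l: "g \<bullet> (x - v) > 0" using eq bp mult_le_0_iff[of \<beta> "g \<bullet> (x - v)"] by auto
    have d1: "((\<lambda>t. v + t *\<^sub>R (x - v)) has_derivative (\<lambda>s. s *\<^sub>R (x - v))) (at \<beta>)"
      by (auto intro!: derivative_eq_intros)
    have d2: "((\<lambda>t. f (v + t *\<^sub>R (x - v))) has_derivative (\<lambda>s. g \<bullet> (s *\<^sub>R (x - v)))) (at \<beta>)"
      using has_derivative_compose[OF d1 fd[unfolded yy]] unfolding yy .
    have "(\<lambda>s. g \<bullet> (s *\<^sub>R (x - v))) = (*) (g \<bullet> (x - v))" by (auto simp: mult.commute)
    with d2 have d3: "DERIV (\<lambda>t. f (v + t *\<^sub>R (x - v))) \<beta> :> g \<bullet> (x - v)"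
      by (simp add: has_field_derivative_def)
    obtain dd where dd: "dd > 0" "\<And>h. h > 0 \<Longrightarrow> h < dd \<Longrightarrow>
       f (v + (\<beta> - h) *\<^sub>R (x - v)) < f (v + \<beta> *\<^sub>R (x - v))"
      using DERIV_pos_inc_left[OF d3 l] by blast
    define h where "h = min dd \<beta> / 2"
    have "h > 0" "h < dd" "h \<le> \<beta>" using dd bp by (auto simp: h_def)
    hence "f (v + (\<beta> - h) *\<^sub>R (x - v)) < f (v + \<beta> *\<^sub>R (x - v))" using dd by blast
    moreover have "\<beta> - h \<in> {0..1}" using b \<open>h > 0\<close> \<open>h \<le> \<beta>\<close> by auto
    ultimately show False using mn by fastforce
  qed
qed

lemma psi_form:
  "agm_psi d gd f gf x0 a y k z = d z + ((\<Sum>i<k. a (Suc i) *\<^sub>R gf (y i)) - gd x0) \<bullet> z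
     + (- d x0 + gd x0 \<bullet> x0 + (\<Sum>i<k. a (Suc i) * (f (y i) - gf (y i) \<bullet> y i)))"
proof -
  have "(\<Sum>i<k. a (Suc i) * (f (y i) + gf (y i) \<bullet> (z - y i)))
     = (\<Sum>i<k. a (Suc i) *\<^sub>R gf (y i)) \<bullet> z + (\<Sum>i<k. a (Suc i) * (f (y i) - gf (y i) \<bullet> y i))"
    by (simp add: inner_sum_left sum.distrib[symmetric] inner_diff_right algebra_simps)
  then show ?thesis unfolding agm_psi_def bregman_def by (simp add: inner_diff_left inner_diff_right)
qed

lemma psi_strong:
  assumes pf: "prox_function nrm d gd"
    and mn: "\<forall>z. agm_psi d gd f gf x0 a y k v \<le> agm_psi d gd f gf x0 a y k z"
  shows "agm_psi d gd f gf x0 a y k v + 1/2 * (nrm (z - v))\<^sup>2 \<le> agm_psi d gd f gf x0 a y k z"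
proof -
  define C where "C = (\<Sum>i<k. a (Suc i) *\<^sub>R gf (y i)) - gd x0"
  define E where "E = - d x0 + gd x0 \<bullet> x0 + (\<Sum>i<k. a (Suc i) * (f (y i) - gf (y i) \<bullet> y i))"
  have P: "\<And>z. agm_psi d gd f gf x0 a y k z = d z + C \<bullet> z + E" unfolding C_def E_def by (rule psi_form)
  have dd: "(d has_derivative (\<lambda>h. gd v \<bullet> h)) (at v)" using pf
    unfolding prox_function_def has_cont_gradient_def by blast
  have der: "((\<lambda>z. d z + C \<bullet> z + E) has_derivative (\<lambda>h. gd v \<bullet> h + C \<bullet> h)) (at v)"
    apply (rule derivative_eq_intros dd refl)+
    apply simp
    done
  have "(\<lambda>h. gd v \<bullet> h + C \<bullet> h) = (\<lambda>h. 0)"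
    by (rule differential_zero_maxmin[OF _ open_UNIV der]) (use mn P in auto)
  hence "gd v \<bullet> (gd v + C) + C \<bullet> (gd v + C) = 0" by metis
  hence "(gd v + C) \<bullet> (gd v + C) = 0" by (simp add: inner_add_left)
  hence "gd v + C = 0" by simp
  hence C: "C = - gd v" by (metis add.commute add_eq_0_iff)
  have sc: "d z - d v - gd v \<bullet> (z - v) \<ge> 1/2 * (nrm (z - v))\<^sup>2" using pf unfolding prox_function_def by blast
  show ?thesis unfolding P C using sc by (simp add: inner_diff_right)
qed



lemma opt_a_step:
  fixes nrm :: "'a::euclidean_space \<Rightarrow> real"
  assumes n: "is_norm nrm" and Ls: "L_smooth nrm L f gf" and sh: "is_sharp_map nrm sharp"
    and g: "gf yy \<noteq> 0"
    and mn: "\<forall>z. f yy + gf yy \<bullet> (x' - yy) + L / 2 * (nrm (x' - yy))\<^sup>2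
                \<le> f yy + gf yy \<bullet> (z - yy) + L / 2 * (nrm (z - yy))\<^sup>2"
    and ap: "a > 0" and eq: "a\<^sup>2 / (A + a) = 1 / L" and A0: "A \<ge> 0"
  shows "A + a > 0 \<and> (A + a) * f x' \<le> (A + a) * f yy - a\<^sup>2 / 2 * (dual_norm nrm (gf yy))\<^sup>2"
proof -
  define D where "D = dual_norm nrm (gf yy)"
  define s where "s = sharp (gf yy)"
  have L: "L > 0" using Ls unfolding L_smooth_def by blast
  have s1: "nrm s \<le> 1" and s2: "gf yy \<bullet> s = D" using sh unfolding is_sharp_map_def s_def D_def by auto
  have s0: "nrm s \<ge> 0" using n unfolding is_norm_def by blast
  have Dn: "D \<ge> 0" using dual_pos[OF n g] unfolding D_def by simp
  have Ap: "A + a > 0" using ap A0 by simp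
  have a2: "a\<^sup>2 = (A + a) / L" using eq Ap L by (simp add: field_simps)
  define z where "z = yy - (D / L) *\<^sub>R s"
  have "nrm (z - yy) = nrm ((D / L) *\<^sub>R s)" unfolding z_def using nrm_neg[OF n] by simp
  also have "\<dots> = \<bar>D / L\<bar> * nrm s" using n unfolding is_norm_def by blast
  finally have nz: "nrm (z - yy) = D / L * nrm s" using Dn L by simp
  have m1: "D / L * nrm s \<le> D / L" using s1 s0 Dn L by (intro mult_left_le) auto
  have "(nrm (z - yy))\<^sup>2 \<le> (D / L)\<^sup>2" unfolding nz
    by (rule power_mono[OF m1]) (use s0 Dn L in simp)
  hence q: "L / 2 * (nrm (z - yy))\<^sup>2 \<le> L / 2 * (D / L)\<^sup>2" using L by simp
  have "gf yy \<bullet> (z - yy) = - (D / L) * D" unfolding z_def using s2 by simp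
  have fx: "f x' \<le> f yy + gf yy \<bullet> (x' - yy) + L / 2 * (nrm (x' - yy))\<^sup>2" by (rule descent[OF n Ls])
  also have "\<dots> \<le> f yy + gf yy \<bullet> (z - yy) + L / 2 * (nrm (z - yy))\<^sup>2" using mn by blast
  also have "\<dots> \<le> f yy - (D / L) * D + L / 2 * (D / L)\<^sup>2" using q \<open>gf yy \<bullet> (z - yy) = - (D / L) * D\<close> by simp
  also have "\<dots> = f yy - D\<^sup>2 / (2 * L)" using L by (simp add: field_simps power2_eq_square)
  finally have "f x' \<le> f yy - D\<^sup>2 / (2 * L)" .
  hence "(A + a) * f x' \<le> (A + a) * (f yy - D\<^sup>2 / (2 * L))" using Ap by simp
  also have "\<dots> = (A + a) * f yy - a\<^sup>2 / 2 * D\<^sup>2" unfolding a2 using L by (simp add: field_simps)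
  finally show ?thesis using Ap unfolding D_def by simp
qed

lemma opt_b_step:
  fixes D :: real
  assumes Dp: "D > 0"
    and c0: "f x' \<le> f yy"
    and nz: "A + a \<noteq> 0" and eq: "f yy - a\<^sup>2 / (2 * (A + a)) * D\<^sup>2 = f x'"
    and lg: "\<forall>b. A + b \<noteq> 0 \<and> f yy - b\<^sup>2 / (2 * (A + b)) * D\<^sup>2 = f x' \<longrightarrow> b \<le> a"
    and A0: "A \<ge> 0"
  shows "a \<ge> 0 \<and> A + a > 0 \<and> (A + a) * f x' \<le> (A + a) * f yy - a\<^sup>2 / 2 * D\<^sup>2"
proof -
  define c where "c = f yy - f x'"
  define \<kappa> where "\<kappa> = 2 * c / D\<^sup>2"
  have c: "c \<ge> 0" using c0 unfolding c_def by simp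
  have k0: "\<kappa> \<ge> 0" using c Dp unfolding \<kappa>_def by simp
  have e1: "a\<^sup>2 * D\<^sup>2 = 2 * c * (A + a)" using eq nz unfolding c_def by (simp add: field_simps)
  have e2: "a\<^sup>2 = \<kappa> * (A + a)" using e1 Dp unfolding \<kappa>_def by (simp add: field_simps)
  have a0: "a \<ge> 0"
  proof (rule ccontr)
    assume "\<not> a \<ge> 0"
    hence an: "a < 0" by simp
    define b where "b = \<kappa> - a"
    have bp: "b > 0" using an k0 unfolding b_def by simp
    have bnz: "A + b \<noteq> 0" using bp A0 by simp
    have "b\<^sup>2 = \<kappa> * (A + b)" unfolding b_def using e2 by (simp add: power2_eq_square algebra_simps)
    hence "b\<^sup>2 * D\<^sup>2 = 2 * c * (A + b)" using Dp unfolding \<kappa>_def by (simp add: field_simps)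
    hence "f yy - b\<^sup>2 / (2 * (A + b)) * D\<^sup>2 = f x'" using bnz unfolding c_def by (simp add: field_simps)
    hence "b \<le> a" using lg bnz by blast
    with bp an show False by simp
  qed
  have Ap: "A + a > 0" using a0 A0 nz by simp
  have "(A + a) * f x' = (A + a) * f yy - a\<^sup>2 / 2 * D\<^sup>2" using eq[symmetric] Ap by (simp add: field_simps)
  then show ?thesis using a0 Ap by simp
qed



theorem mainTheorem3:
  fixes nrm :: "'a::euclidean_space \<Rightarrow> real"
    and d :: "'a \<Rightarrow> real" and gd :: "'a \<Rightarrow> 'a"
    and sharp :: "'a \<Rightarrow> 'a"
    and f :: "'a \<Rightarrow> real" and gf :: "'a \<Rightarrow> 'a"
    and L \<gamma> :: real and xs :: 'a and opt_a :: bool and k :: nat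
    and x v y :: "nat \<Rightarrow> 'a" and \<beta> h a A :: "nat \<Rightarrow> real"
  assumes "is_norm nrm"
    and "prox_function nrm d gd"
    and "is_sharp_map nrm sharp"
    and "L_smooth nrm L f gf"
    and "weakly_quasi_convex \<gamma> f gf xs"
    and "agmsdr_steps opt_a nrm d gd sharp f gf L k x v y \<beta> h a A"
    and "\<forall>i<k. gf (y i) \<noteq> 0"
  shows "A k * (f (x k) - f xs) \<le> (1 - \<gamma>) * A k * (f (x 0) - f xs) + bregman d gd xs (x 0)"
proof -
  note n = assms(1) and pf = assms(2) and sh = assms(3) and Ls = assms(4) and wq = assms(5)
    and st = assms(6)[unfolded agmsdr_steps_def]
  define \<psi> where "\<psi> j z = agm_psi d gd f gf (x 0) a y j z" for j z
  define D where "D i = dual_norm nrm (gf (y i))" for i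
  have A00: "A 0 = 0" and v00: "v 0 = x 0" using st by auto
  have fd: "\<And>p. (f has_derivative (\<lambda>h. gf p \<bullet> h)) (at p)" using Ls
    unfolding L_smooth_def has_cont_gradient_def by blast
  have bet: "\<And>i. i < k \<Longrightarrow> \<beta> i \<in> {0..1}" using st by blast
  have lsm: "\<And>i. i < k \<Longrightarrow> \<forall>b\<in>{0..1}. f (v i + \<beta> i *\<^sub>R (x i - v i)) \<le> f (v i + b *\<^sub>R (x i - v i))"
    using st by blast
  have yd: "\<And>i. i < k \<Longrightarrow> y i = v i + \<beta> i *\<^sub>R (x i - v i)" using st by blast
  have Ad: "\<And>i. i < k \<Longrightarrow> A (Suc i) = A i + a (Suc i)" using st by blast
  have vmin: "\<And>i. i < k \<Longrightarrow> \<forall>z. \<psi> (Suc i) (v (Suc i)) \<le> \<psi> (Suc i) z"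
    using st unfolding \<psi>_def by blast
  have fyx: "\<And>i. i < k \<Longrightarrow> f (y i) \<le> f (x i)"
  proof -
    fix i assume i: "i < k"
    have "f (v i + \<beta> i *\<^sub>R (x i - v i)) \<le> f (v i + 1 *\<^sub>R (x i - v i))" using bspec[OF lsm[OF i], of 1] by simp
    then show "f (y i) \<le> f (x i)" using yd[OF i] by simp
  qed
  have lin: "\<And>i. i < k \<Longrightarrow> 0 \<le> gf (y i) \<bullet> (v i - y i)"
    by (rule linesearch[OF fd bet lsm yd])
  have key: "\<And>i. i < k \<Longrightarrow> 0 \<le> A i \<Longrightarrow> 0 \<le> a (Suc i) \<and> A (Suc i) > 0 \<and>
      A (Suc i) * f (x (Suc i)) \<le> A (Suc i) * f (y i) - (a (Suc i))\<^sup>2 / 2 * (D i)\<^sup>2"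
  proof -
    fix i assume i: "i < k" and A0: "0 \<le> A i"
    have g: "gf (y i) \<noteq> 0" using assms(7) i by blast
    show "0 \<le> a (Suc i) \<and> A (Suc i) > 0 \<and>
      A (Suc i) * f (x (Suc i)) \<le> A (Suc i) * f (y i) - (a (Suc i))\<^sup>2 / 2 * (D i)\<^sup>2"
    proof (cases opt_a)
      case True
      have "(\<forall>z. f (y i) + gf (y i) \<bullet> (x (Suc i) - y i) + L / 2 * (nrm (x (Suc i) - y i))\<^sup>2
                \<le> f (y i) + gf (y i) \<bullet> (z - y i) + L / 2 * (nrm (z - y i))\<^sup>2) \<and>
           a (Suc i) > 0 \<and> (a (Suc i))\<^sup>2 / (A i + a (Suc i)) = 1 / L"
        using st i True by auto
      then show ?thesis using opt_a_step[OF n Ls sh g, of "x (Suc i)" "a (Suc i)" "A i"] A0 Ad[OF i]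
        unfolding D_def by auto
    next
      case False
      have b: "h (Suc i) \<ge> 0 \<and>
           (\<forall>t\<ge>0. f (y i - h (Suc i) *\<^sub>R sharp (gf (y i))) \<le> f (y i - t *\<^sub>R sharp (gf (y i)))) \<and>
           x (Suc i) = y i - h (Suc i) *\<^sub>R sharp (gf (y i)) \<and>
           A i + a (Suc i) \<noteq> 0 \<and>
           f (y i) - (a (Suc i))\<^sup>2 / (2 * (A i + a (Suc i))) * (dual_norm nrm (gf (y i)))\<^sup>2
             = f (x (Suc i)) \<and>
           (\<forall>b. A i + b \<noteq> 0 \<and>
                f (y i) - b\<^sup>2 / (2 * (A i + b)) * (dual_norm nrm (gf (y i)))\<^sup>2 = f (x (Suc i))
                \<longrightarrow> b \<le> a (Suc i))"
        using st i False by auto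
      have c0: "f (x (Suc i)) \<le> f (y i)"
      proof -
        have "f (y i - h (Suc i) *\<^sub>R sharp (gf (y i))) \<le> f (y i - 0 *\<^sub>R sharp (gf (y i)))"
          using b by blast
        then show ?thesis using b by simp
      qed
      show ?thesis
        using opt_b_step[where f=f and x'="x (Suc i)" and yy="y i" and A="A i" and a="a (Suc i)", OF dual_pos[OF n g] c0] b A0 Ad[OF i]
        unfolding D_def by auto
    qed
  qed
  have psiS: "\<And>j z. \<psi> (Suc j) z = \<psi> j z + a (Suc j) * (f (y j) + gf (y j) \<bullet> (z - y j))"
    unfolding \<psi>_def agm_psi_def by simp
  have inv: "j \<le> k \<Longrightarrow> 0 \<le> A j \<and> f (x j) \<le> f (x 0) \<and> A j * f (x j) \<le> \<psi> j (v j) \<and>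
      (\<forall>z. \<psi> j (v j) \<le> \<psi> j z) \<and> A j = (\<Sum>i<j. a (Suc i))" for j
  proof (induction j)
    case 0
    have "\<psi> 0 (v 0) = 0" unfolding \<psi>_def agm_psi_def bregman_def v00 by simp
    moreover have "\<psi> 0 z \<ge> 0" for z
    proof -
      have "d z - d (x 0) - gd (x 0) \<bullet> (z - x 0) \<ge> 1/2 * (nrm (z - x 0))\<^sup>2"
        using pf unfolding prox_function_def by blast
      moreover have "1/2 * (nrm (z - x 0))\<^sup>2 \<ge> 0" by simp
      ultimately have "d z - d (x 0) - gd (x 0) \<bullet> (z - x 0) \<ge> 0" by linarith
      then show ?thesis unfolding \<psi>_def agm_psi_def bregman_def by simp
    qed
    ultimately show ?case using A00 by simp
  next
    case (Suc j)
    hence j: "j < k" by simp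
    have IH: "0 \<le> A j" "f (x j) \<le> f (x 0)" "A j * f (x j) \<le> \<psi> j (v j)"
      "\<forall>z. \<psi> j (v j) \<le> \<psi> j z" "A j = (\<Sum>i<j. a (Suc i))" using Suc by auto
    obtain a0: "0 \<le> a (Suc j)" and Ap: "A (Suc j) > 0" and
      desc: "A (Suc j) * f (x (Suc j)) \<le> A (Suc j) * f (y j) - (a (Suc j))\<^sup>2 / 2 * (D j)\<^sup>2"
      using key[OF j IH(1)] by blast
    have fxy: "f (x (Suc j)) \<le> f (y j)"
    proof -
      have "A (Suc j) * f (x (Suc j)) \<le> A (Suc j) * f (y j)" using desc
        by (smt (verit) divide_nonneg_nonneg zero_le_power2 mult_nonneg_nonneg)
      then show ?thesis using Ap by simp
    qed
    define g where "g = gf (y j)"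
    define w where "w = v (Suc j)"
    define nn where "nn = nrm (w - v j)"
    have strong: "\<psi> j (v j) + 1/2 * nn\<^sup>2 \<le> \<psi> j w"
      using psi_strong[OF pf IH(4)[unfolded \<psi>_def]] unfolding \<psi>_def nn_def .
    have gi: "g \<bullet> (v j - w) \<le> D j * nn" unfolding g_def D_def nn_def
      using dual_ineq[OF n] nrm_minus_commute[OF n] by metis
    have quad: "1/2 * nn\<^sup>2 + a (Suc j) * (g \<bullet> (w - v j)) \<ge> - ((a (Suc j))\<^sup>2 / 2 * (D j)\<^sup>2)"
    proof -
      have "a (Suc j) * (g \<bullet> (w - v j)) \<ge> - (a (Suc j) * (D j * nn))"
        using mult_left_mono[OF gi a0] by (simp add: inner_diff_right right_diff_distrib)
      moreover have "0 \<le> (nn - a (Suc j) * D j)\<^sup>2" by simp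
      ultimately show ?thesis by (simp add: power2_eq_square algebra_simps)
    qed
    have lj: "0 \<le> a (Suc j) * (g \<bullet> (v j - y j))" using lin[OF j] a0 unfolding g_def by simp
    have "\<psi> (Suc j) w = \<psi> j w + a (Suc j) * (f (y j) + g \<bullet> (w - y j))" unfolding g_def by (rule psiS)
    also have "g \<bullet> (w - y j) = g \<bullet> (w - v j) + g \<bullet> (v j - y j)" by (simp add: inner_diff_right)
    finally have "\<psi> (Suc j) w \<ge> A j * f (x j) + a (Suc j) * f (y j) - (a (Suc j))\<^sup>2 / 2 * (D j)\<^sup>2"
      using strong quad lj IH(3) by (simp add: algebra_simps)
    moreover have "A j * f (y j) \<le> A j * f (x j)" using fyx[OF j] IH(1) by (simp add: mult_left_mono)
    ultimately have "\<psi> (Suc j) w \<ge> A (Suc j) * f (y j) - (a (Suc j))\<^sup>2 / 2 * (D j)\<^sup>2"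
      using Ad[OF j] by (simp add: algebra_simps)
    hence "A (Suc j) * f (x (Suc j)) \<le> \<psi> (Suc j) (v (Suc j))" using desc unfolding w_def by simp
    moreover have "f (x (Suc j)) \<le> f (x 0)" using fxy fyx[OF j] IH(2) by simp
    moreover have "0 \<le> A (Suc j)" using Ap by simp
    moreover have "A (Suc j) = (\<Sum>i<Suc j. a (Suc i))" using Ad[OF j] IH(5) by simp
    ultimately show ?case using vmin[OF j] by blast
  qed
  have I: "0 \<le> A k" "A k * f (x k) \<le> \<psi> k (v k)" "\<forall>z. \<psi> k (v k) \<le> \<psi> k z"
    "A k = (\<Sum>i<k. a (Suc i))" using inv[of k] by auto
  have g01: "0 < \<gamma>" "\<gamma> \<le> 1" and wqi: "\<And>z. \<gamma> * (f z - f xs) \<le> gf z \<bullet> (z - xs)"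
    using wq unfolding weakly_quasi_convex_def by auto
  have trm: "a (Suc i) * (f (y i) + gf (y i) \<bullet> (xs - y i)) \<le> a (Suc i) * ((1 - \<gamma>) * f (x 0) + \<gamma> * f xs)"
    if i: "i < k" for i
  proof -
    have ai: "0 \<le> a (Suc i)" and Ai: "0 \<le> A i" using inv[of i] inv[of "Suc i"] i Ad[OF i] key[OF i] by auto
    have fy: "f (y i) \<le> f (x 0)" using fyx[OF i] inv[of i] i by auto
    have "gf (y i) \<bullet> (xs - y i) = - (gf (y i) \<bullet> (y i - xs))" by (simp add: inner_diff_right)
    hence "f (y i) + gf (y i) \<bullet> (xs - y i) \<le> (1 - \<gamma>) * f (y i) + \<gamma> * f xs" using wqi[of "y i"]
      by (simp add: algebra_simps)
    also have "\<dots> \<le> (1 - \<gamma>) * f (x 0) + \<gamma> * f xs" using fy g01 by (simp add: mult_left_mono)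
    finally show ?thesis using ai by (simp add: mult_left_mono)
  qed
  have "A k * f (x k) \<le> \<psi> k xs" using I by (meson order_trans)
  also have "\<psi> k xs = bregman d gd xs (x 0) + (\<Sum>i<k. a (Suc i) * (f (y i) + gf (y i) \<bullet> (xs - y i)))"
    unfolding \<psi>_def agm_psi_def ..
  also have "\<dots> \<le> bregman d gd xs (x 0) + (\<Sum>i<k. a (Suc i) * ((1 - \<gamma>) * f (x 0) + \<gamma> * f xs))"
    using trm by (intro add_left_mono sum_mono) auto
  also have "\<dots> = bregman d gd xs (x 0) + A k * ((1 - \<gamma>) * f (x 0) + \<gamma> * f xs)"
    using I(4) by (simp add: sum_distrib_right)
  finally show ?thesis by (simp add: algebra_simps)
qed


end
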